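(* There exist an instance domain $\mathcal{X}$ and a hypothesis class $\mathcal{H}$ consisting of a single hypothesis such that the following holds for all integers $k,l\ge 0$: if $k<l$, then for any integer $m\ge 0$ there exists a strategy of the adversary, all of whose presented sequences satisfy the $l$-bias assumption with respect to $\mathcal{H}$, that forces any deterministic learning algorithm guaranteeing at most $k$ mistakes (on all sequences satisfying the $l$-bias assumption with respect to $\mathcal{H}$) to have at least $m+1$ nontrivial rounds.
   Context: Online classification with abstention: at each round $t$ the adversary presents $x_t\in\mathcal{X}$, the learner predicts $\hat y_t\in\{-1,+1,\bot\}$ ($\bot$ = abstain), then the adversary reveals $y_t\in\{-1,+1\}$. A mistake is a round with $\hat y_t=-y_t$; a round is nontrivial if the learner makes a mistake or abstains on it. A deterministic learner's prediction is a deterministic function of the past labeled examples and the current example; the adversary may choose examples and labels adaptively. Hypotheses are maps $\mathcal{X}\to\{-1,+1\}$. For hypotheses $h_1,h_2$, $h_1\cdot h_2$ is the pointwise product, and for classes $\mathcal{H}_1\cdot\mathcal{H}_2=\{h_1\cdot h_2:h_i\in\mathcal{H}_i\}$. $\mathcal{C}^l$ is the class of functions $x\mapsto 1-2I(x\in D)$ for subsets $D\subseteq\mathcal{X}$ with $|D|\le l$, and $\mathcal{H}^l=\mathcal{H}\cdot\mathcal{C}^l$. A sequence $(x_1,y_1),\dots,(x_n,y_n)$ satisfies the $l$-bias assumption with respect to $\mathcal{H}$ if some $h\in\mathcal{H}^l$ has $h(x_t)=y_t$ for all $t$. An algorithm guarantees at most $k$ mistakes if on every admissible sequence it makes at most $k$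 mistakes. *)

theory Defs
  imports Main
begin

text \<open>Labels are the integers -1 and +1; a prediction is Some 1, Some (-1), or None (abstain).
Hypotheses are int-valued maps on the instance type (only values on the domain X matter).\<close>

type_synonym 'x learner = "('x \<times> int) list \<Rightarrow> 'x \<Rightarrow> int option"
type_synonym 'x history = "('x \<times> int option \<times> int) list"

definition hyp_prod :: "('x \<Rightarrow> int) \<Rightarrow> ('x \<Rightarrow> int) \<Rightarrow> ('x \<Rightarrow> int)" where
  "hyp_prod h1 h2 = (\<lambda>x. h1 x * h2 x)"

definition class_prod :: "('x \<Rightarrow> int) set \<Rightarrow> ('x \<Rightarrow> int) set \<Rightarrow> ('x \<Rightarrow> int) set" where
  "class_prod H1 H2 = {hyp_prod h1 h2 | h1 h2. h1 \<in> H1 \<and> h2 \<in> H2}"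

definition corr_class :: "'x set \<Rightarrow> nat \<Rightarrow> ('x \<Rightarrow> int) set" where
  "corr_class X l = {(\<lambda>x. 1 - 2 * (if x \<in> D then 1 else 0)) | D. D \<subseteq> X \<and> finite D \<and> card D \<le> l}"

definition biased_class :: "'x set \<Rightarrow> ('x \<Rightarrow> int) set \<Rightarrow> nat \<Rightarrow> ('x \<Rightarrow> int) set" where
  "biased_class X H l = class_prod H (corr_class X l)"

definition l_bias :: "'x set \<Rightarrow> ('x \<Rightarrow> int) set \<Rightarrow> nat \<Rightarrow> ('x \<times> int) list \<Rightarrow> bool" where
  "l_bias X H l S \<longleftrightarrow> (\<exists>h \<in> biased_class X H l. \<forall>t < length S. h (fst (S ! t)) = snd (S ! t))"

definition valid_seq :: "'x set \<Rightarrow> ('x \<times> int) list \<Rightarrow> bool" where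
  "valid_seq X S \<longleftrightarrow> set S \<subseteq> X \<times> {-1, 1}"

definition valid_learner :: "'x learner \<Rightarrow> bool" where
  "valid_learner L \<longleftrightarrow> (\<forall>S x. L S x \<in> {None, Some 1, Some (-1)})"

definition mistakes :: "'x learner \<Rightarrow> ('x \<times> int) list \<Rightarrow> nat" where
  "mistakes L S = card {t. t < length S \<and> L (take t S) (fst (S ! t)) = Some (- snd (S ! t))}"

definition guarantees_mistakes :: "'x set \<Rightarrow> ('x \<Rightarrow> int) set \<Rightarrow> nat \<Rightarrow> nat \<Rightarrow> 'x learner \<Rightarrow> bool" where
  "guarantees_mistakes X H l k L \<longleftrightarrow>
     (\<forall>S. valid_seq X S \<and> l_bias X H l S \<longrightarrow> mistakes L S \<le> k)"

definition labels_of :: "'x history \<Rightarrow> ('x \<times> int) list" where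
  "labels_of h = map (\<lambda>(x, p, y). (x, y)) h"

text \<open>Interaction of a deterministic learner with an adaptive adversary given by an example
rule ax (from the history) and a label rule ay (from the history, current example and prediction).\<close>
fun play :: "'x learner \<Rightarrow> ('x history \<Rightarrow> 'x) \<Rightarrow> ('x history \<Rightarrow> 'x \<Rightarrow> int option \<Rightarrow> int)
             \<Rightarrow> nat \<Rightarrow> 'x history" where
  "play L ax ay 0 = []"
| "play L ax ay (Suc n) =
     (let h = play L ax ay n; x = ax h; p = L (labels_of h) x; y = ay h x p in h @ [(x, p, y)])"

definition nontrivial_rounds :: "'x history \<Rightarrow> nat" where
  "nontrivial_rounds h =
     card {t. t < length h \<and> (fst (snd (h ! t)) = None \<or> fst (snd (h ! t)) = Some (- snd (snd (h ! t))))}"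

end

theory Submission
  imports Defs
begin

lemma play_len: "length (play L ax ay n) = n"
  by (induction n) (simp_all add: Let_def)

lemma play_Suc: "play L ax ay (Suc n) = play L ax ay n @
   [(ax (play L ax ay n), L (labels_of (play L ax ay n)) (ax (play L ax ay n)),
     ay (play L ax ay n) (ax (play L ax ay n)) (L (labels_of (play L ax ay n)) (ax (play L ax ay n))))]"
  by (simp add: Let_def)

declare play.simps(2)[simp del]

lemma play_prefix: "t \<le> n \<Longrightarrow> take t (play L ax ay n) = play L ax ay t"
proof (induction n)
  case 0 then show ?case by simp
next
  case (Suc n)
  show ?case
  proof (cases "t = Suc n")
    case True then show ?thesis by (simp add: play_len)
  next
    case False
    then have "t \<le> n" using Suc by simp
    then show ?thesis using Suc by (simp only: play_Suc) (simp add: play_len)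
  qed
qed

lemma play_nth: "t < n \<Longrightarrow> play L ax ay n ! t =
   (ax (play L ax ay t), L (labels_of (play L ax ay t)) (ax (play L ax ay t)),
     ay (play L ax ay t) (ax (play L ax ay t)) (L (labels_of (play L ax ay t)) (ax (play L ax ay t))))"
proof -
  assume "t < n"
  then have "play L ax ay n ! t = take (Suc t) (play L ax ay n) ! t" by simp
  also have "\<dots> = play L ax ay (Suc t) ! t" using \<open>t < n\<close> by (simp add: play_prefix)
  finally show ?thesis by (simp add: play_Suc play_len nth_append)
qed

definition negs :: "'x history \<Rightarrow> nat set" where
  "negs h = {s. s < length h \<and> snd (snd (h ! s)) = -1}"

definition adv_ay :: "nat \<Rightarrow> nat history \<Rightarrow> nat \<Rightarrow> int option \<Rightarrow> int" where
  "adv_ay l h x p = (if p = Some 1 \<and> card (negs h) < l then -1 else 1)"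

lemma negs_Suc: "negs (play L ax ay (Suc n)) = negs (play L ax ay n) \<union>
   (if snd (snd (play L ax ay (Suc n) ! n)) = -1 then {n} else {})"
  unfolding negs_def
  by (auto simp: play_len nth_append play_Suc[of L ax ay n] less_Suc_eq)

lemma negs_fin: "finite (negs h)"
  unfolding negs_def by simp

lemma negs_bound: "card (negs (play L ax (adv_ay l) n)) \<le> l"
proof (induction n)
  case 0 then show ?case by (simp add: negs_def)
next
  case (Suc n)
  have nn: "n \<notin> negs (play L ax (adv_ay l) n)" by (simp add: negs_def play_len)
  show ?case
  proof (cases "snd (snd (play L ax (adv_ay l) (Suc n) ! n)) = -1")
    case True
    then have "card (negs (play L ax (adv_ay l) n)) < l"
      by (simp add: play_nth adv_ay_def split: if_splits)
    then show ?thesis using True nn by (simp add: negs_Suc[of L ax "adv_ay l" n] card_insert_disjoint[OF negs_fin])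
  next
    case False
    then show ?thesis using Suc by (simp add: negs_Suc[of L ax "adv_ay l" n])
  qed
qed

lemma negs_mono: "t \<le> n \<Longrightarrow> negs (play L ax ay t) \<subseteq> negs (play L ax ay n)"
proof -
  assume "t \<le> n"
  have "negs (play L ax ay t) = negs (take t (play L ax ay n))" using \<open>t \<le> n\<close> by (simp add: play_prefix)
  also have "\<dots> \<subseteq> negs (play L ax ay n)" unfolding negs_def by auto
  finally show ?thesis .
qed

lemma labels_nth: "t < length h \<Longrightarrow> labels_of h ! t = (fst (h ! t), snd (snd (h ! t)))"
  unfolding labels_of_def by (simp add: case_prod_beta)

lemma labels_take: "labels_of (take t h) = take t (labels_of h)"
  unfolding labels_of_def by (simp add: take_map)

theorem mainTheorem1:
  shows "\<exists>(X :: nat set) (H :: (nat \<Rightarrow> int) set).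
     (\<exists>h. H = {h} \<and> (\<forall>x \<in> X. h x \<in> {-1, 1})) \<and>
     (\<forall>k l :: nat. k < l \<longrightarrow> (\<forall>m :: nat.
        \<exists>(T :: nat) (ax :: nat history \<Rightarrow> nat) (ay :: nat history \<Rightarrow> nat \<Rightarrow> int option \<Rightarrow> int).
          (\<forall>L. valid_learner L \<longrightarrow>
               valid_seq X (labels_of (play L ax ay T)) \<and> l_bias X H l (labels_of (play L ax ay T))) \<and>
          (\<forall>L. valid_learner L \<and> guarantees_mistakes X H l k L \<longrightarrow>
               nontrivial_rounds (play L ax ay T) \<ge> m + 1)))"
proof (rule exI[of _ UNIV], rule exI[of _ "{\<lambda>_. 1}"], intro conjI allI impI)
  show "\<exists>h. {\<lambda>_. 1} = {h} \<and> (\<forall>x\<in>UNIV. h x \<in> {-1, 1::int})" by auto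
next
  fix k l m :: nat
  assume kl: "k < l"
  define ax :: "nat history \<Rightarrow> nat" where "ax = length"
  define T where "T = Suc m"
  have vs: "valid_seq UNIV (labels_of (play L ax (adv_ay l) n))" for L n
  proof -
    have yy: "snd (snd (play L ax (adv_ay l) n ! t)) \<in> {-1, 1}" if "t < n" for t
      using that by (simp add: play_nth adv_ay_def)
    show ?thesis unfolding valid_seq_def
    proof
      fix p assume "p \<in> set (labels_of (play L ax (adv_ay l) n))"
      then obtain i where i: "i < n" "p = labels_of (play L ax (adv_ay l) n) ! i"
        by (auto simp: in_set_conv_nth labels_of_def play_len)
      then show "p \<in> UNIV \<times> {-1, 1}" using yy[OF i(1)] by (simp add: labels_nth play_len)
    qed
  qed
  have fst_t: "fst (play L ax (adv_ay l) n ! t) = t" if "t < n" for L n t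
    using that by (simp add: play_nth ax_def play_len)
  have A: "\<forall>L. valid_learner L \<longrightarrow>
         valid_seq UNIV (labels_of (play L ax (adv_ay l) T)) \<and>
         l_bias UNIV {\<lambda>_. 1} l (labels_of (play L ax (adv_ay l) T))"
  proof (intro allI impI conjI)
    fix L :: "nat learner"
    show "valid_seq UNIV (labels_of (play L ax (adv_ay l) T))" by (rule vs)
    let ?h = "play L ax (adv_ay l) T"
    let ?D = "negs ?h"
    have yv: "snd (snd (?h ! t)) \<in> {-1, 1}" if "t < T" for t
      using that by (simp add: play_nth adv_ay_def)
    have "(\<lambda>x. 1 - 2 * (if x \<in> ?D then 1 else 0)) \<in> corr_class UNIV l"
      unfolding corr_class_def using negs_bound[of L ax l T] negs_fin by blast
    then have "hyp_prod (\<lambda>_. 1) (\<lambda>x. 1 - 2 * (if x \<in> ?D then 1 else 0)) \<in> biased_class UNIV {\<lambda>_. 1} l"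
      unfolding biased_class_def class_prod_def by blast
    moreover have "\<forall>t < length (labels_of ?h).
        hyp_prod (\<lambda>_. 1) (\<lambda>x. 1 - 2 * (if x \<in> ?D then 1 else 0)) (fst (labels_of ?h ! t)) = snd (labels_of ?h ! t)"
    proof (intro allI impI)
      fix t assume "t < length (labels_of ?h)"
      then have t: "t < T" by (simp add: labels_of_def play_len)
      show "hyp_prod (\<lambda>_. 1) (\<lambda>x. 1 - 2 * (if x \<in> ?D then 1 else 0)) (fst (labels_of ?h ! t)) = snd (labels_of ?h ! t)"
        using t yv[OF t] fst_t[OF t]
        by (auto simp: labels_nth play_len hyp_prod_def negs_def)
    qed
    ultimately show "l_bias UNIV {\<lambda>_. 1} l (labels_of ?h)" unfolding l_bias_def by blast
  qed
  have B: "\<forall>L. valid_learner L \<and> guarantees_mistakes UNIV {\<lambda>_. 1} l k L \<longrightarrow>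
         m + 1 \<le> nontrivial_rounds (play L ax (adv_ay l) T)"
  proof (intro allI impI)
    fix L :: "nat learner"
    assume a: "valid_learner L \<and> guarantees_mistakes UNIV {\<lambda>_. 1} l k L"
    let ?h = "play L ax (adv_ay l) T"
    let ?S = "labels_of ?h"
    have lb: "l_bias UNIV {\<lambda>_. 1} l ?S"
      using A a by blast
    have mk: "mistakes L ?S \<le> k" using a vs lb unfolding guarantees_mistakes_def by blast
    have pred: "L (take t ?S) (fst (?S ! t)) = fst (snd (?h ! t))" if "t < T" for t
      using that by (simp add: labels_nth play_len labels_take[symmetric] play_prefix play_nth ax_def)
    have "negs ?h \<subseteq> {t. t < length ?S \<and> L (take t ?S) (fst (?S ! t)) = Some (- snd (?S ! t))}"
    proof
      fix t assume "t \<in> negs ?h"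
      then have t: "t < T" and y: "snd (snd (?h ! t)) = -1" by (auto simp: negs_def play_len)
      then have "fst (snd (?h ! t)) = Some 1"
        by (simp add: play_nth adv_ay_def split: if_splits)
      then show "t \<in> {t. t < length ?S \<and> L (take t ?S) (fst (?S ! t)) = Some (- snd (?S ! t))}"
        using t y pred[OF t] by (simp add: labels_nth play_len) (simp add: labels_of_def play_len)
    qed
    then have "card (negs ?h) \<le> mistakes L ?S" unfolding mistakes_def
      by (intro card_mono) auto
    with mk have negk: "card (negs ?h) \<le> k" by simp
    have "{t. t < length ?h \<and> (fst (snd (?h ! t)) = None \<or> fst (snd (?h ! t)) = Some (- snd (snd (?h ! t))))} = {..<T}"
    proof (intro set_eqI iffI)
      fix t assume "t \<in> {..<T}"
      then have t: "t < T" by simp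
      have "card (negs (play L ax (adv_ay l) t)) \<le> card (negs ?h)"
        using t negs_mono[of t T L ax "adv_ay l"] negs_fin by (intro card_mono) auto
      then have c: "card (negs (play L ax (adv_ay l) t)) < l" using negk kl by simp
      have "L (labels_of (play L ax (adv_ay l) t)) (ax (play L ax (adv_ay l) t)) \<in> {None, Some 1, Some (-1)}"
        using a unfolding valid_learner_def by blast
      then show "t \<in> {t. t < length ?h \<and> (fst (snd (?h ! t)) = None \<or> fst (snd (?h ! t)) = Some (- snd (snd (?h ! t))))}"
        using t c by (auto simp: play_nth play_len adv_ay_def)
    qed (simp add: play_len)
    then show "m + 1 \<le> nontrivial_rounds ?h" unfolding nontrivial_rounds_def T_def by simp
  qed
  show "\<exists>(T :: nat) (ax :: nat history \<Rightarrow> nat) (ay :: nat history \<Rightarrow> nat \<Rightarrow> int option \<Rightarrow> int).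
          (\<forall>L. valid_learner L \<longrightarrow>
               valid_seq UNIV (labels_of (play L ax ay T)) \<and> l_bias UNIV {\<lambda>_. 1} l (labels_of (play L ax ay T))) \<and>
          (\<forall>L. valid_learner L \<and> guarantees_mistakes UNIV {\<lambda>_. 1} l k L \<longrightarrow>
               nontrivial_rounds (play L ax ay T) \<ge> m + 1)"
    using A B by blast
qed

end
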